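(* Let $\mathcal{P}$ be a collection of cells with maximal rectangles $\mathcal{B}_1,\dots,\mathcal{B}_p$ and switching rook polynomial $\sum_{j=0}^d\tilde r_j(\mathcal{P})t^j$, $d=r(\mathcal{P})$. Suppose $\tilde r_d(\mathcal{P})=1$, and let $\mathcal{T}$ be the unique canonical $r(\mathcal{P})$-rook configuration in $\mathcal{P}$ with respect to $\mathcal{B}_1,\dots,\mathcal{B}_p$. Then: (1) every column of $\mathcal{P}$ contains a cell occupied by a rook of $\mathcal{T}$, and every row of $\mathcal{P}$ contains a cell occupied by a rook of $\mathcal{T}$; (2) if $R$ is a rook placed in a cell of $\mathcal{P}$ not occupied by any rook of $\mathcal{T}$, then there exist exactly two rooks of $\mathcal{T}$ that are in attacking position with $R$.
   Context: A cell is $[a,a+(1,1)]\subset\mathbb{R}^2$ with $a\in\mathbb{Z}^2$ its lower left corner; a collection of cells is a non-empty finite set of cells. For lower left corners $a\le b$, the rectangle $[A,B]$ is the set of cells whose lower left corner $c$ satisfies $a\le c\le b$. A row (resp. column) of $\mathcal{P}$ is an inclusion-maximal rectangle of cells of $\mathcal{P}$ all having the same second (resp. first) lower-left coordinate. A maximal rectangle of $\mathcal{P}$ is a rectangle of cells of $\mathcal{P}$ not properly contained in another such. Two rooks on distinct cells attack each other if some row or column of $\mathcal{P}$ contains both cells; a $k$-rook configuration is a set of $k$ pairwise non-attacking rooks on distinct cells of $\mathcal{P}$; $r(\mathcal{P})$ is the max $k$. A switch moves two rooks of a configuration occupying the lower-left and upper-right (resp. upper-left and lower-right) corner cells of a rectangle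 all of whose cells lie in $\mathcal{P}$ to the other two corner cells; $\tilde r_k(\mathcal{P})$ is the number of classes of $k$-rook configurations modulo sequences of switches. Canonical configuration with respect to the ordering $\mathcal{B}_1,\dots,\mathcal{B}_p$: starting from a configuration, for $i=1,\dots,p$ in turn, the rooks currently lying in $\mathcal{B}_i$, occupying cells with first coordinates $x_1<\dots<x_r$ and second coordinates $y_1<\dots<y_r$, are replaced by rooks on the cells with lower left corners $(x_1,y_1),\dots,(x_r,y_r)$; the result is the canonical configuration of the starting one, and it is equivalent to it up to switches. *)

theory Defs
  imports Main
begin

text \<open>A cell is identified with its lower left corner in \<open>int \<times> int\<close>;
  a collection of cells is a finite non-empty set of such corners.\<close>

type_synonym cell = "int \<times> int"

definition collection :: "cell set \<Rightarrow> bool" where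
  "collection P \<longleftrightarrow> finite P \<and> P \<noteq> {}"

definition rect :: "cell \<Rightarrow> cell \<Rightarrow> cell set" where
  "rect a b = {c. fst a \<le> fst c \<and> fst c \<le> fst b \<and> snd a \<le> snd c \<and> snd c \<le> snd b}"

definition is_rect_in :: "cell set \<Rightarrow> cell set \<Rightarrow> bool" where
  "is_rect_in P R \<longleftrightarrow> (\<exists>a b. fst a \<le> fst b \<and> snd a \<le> snd b \<and> R = rect a b) \<and> R \<subseteq> P"

definition is_max_rect :: "cell set \<Rightarrow> cell set \<Rightarrow> bool" where
  "is_max_rect P R \<longleftrightarrow> is_rect_in P R \<and> \<not> (\<exists>R'. is_rect_in P R' \<and> R \<subset> R')"

definition is_hrect_in :: "cell set \<Rightarrow> cell set \<Rightarrow> bool" where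
  "is_hrect_in P R \<longleftrightarrow> is_rect_in P R \<and> (\<forall>c\<in>R. \<forall>d\<in>R. snd c = snd d)"

definition is_vrect_in :: "cell set \<Rightarrow> cell set \<Rightarrow> bool" where
  "is_vrect_in P R \<longleftrightarrow> is_rect_in P R \<and> (\<forall>c\<in>R. \<forall>d\<in>R. fst c = fst d)"

definition is_row :: "cell set \<Rightarrow> cell set \<Rightarrow> bool" where
  "is_row P R \<longleftrightarrow> is_hrect_in P R \<and> \<not> (\<exists>R'. is_hrect_in P R' \<and> R \<subset> R')"

definition is_col :: "cell set \<Rightarrow> cell set \<Rightarrow> bool" where
  "is_col P R \<longleftrightarrow> is_vrect_in P R \<and> \<not> (\<exists>R'. is_vrect_in P R' \<and> R \<subset> R')"

definition attacks :: "cell set \<Rightarrow> cell \<Rightarrow> cell \<Rightarrow> bool" where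
  "attacks P c d \<longleftrightarrow> c \<noteq> d \<and>
     (\<exists>R. (is_row P R \<or> is_col P R) \<and> c \<in> R \<and> d \<in> R)"

definition rook_config :: "cell set \<Rightarrow> nat \<Rightarrow> cell set \<Rightarrow> bool" where
  "rook_config P k C \<longleftrightarrow> C \<subseteq> P \<and> finite C \<and> card C = k \<and>
     (\<forall>c\<in>C. \<forall>d\<in>C. \<not> attacks P c d)"

definition rook_number :: "cell set \<Rightarrow> nat" where
  "rook_number P = Max {k. \<exists>C. rook_config P k C}"

text \<open>A switch: rooks at a and b occupy opposite corners of a rectangle contained in P
  (lower-left/upper-right if snd a < snd b, upper-left/lower-right if snd a > snd b);
  they are moved to the other two corners.\<close>
definition switch :: "cell set \<Rightarrow> cell set \<Rightarrow> cell set \<Rightarrow> bool" where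
  "switch P C C' \<longleftrightarrow> (\<exists>a b. a \<in> C \<and> b \<in> C \<and> fst a < fst b \<and> snd a \<noteq> snd b \<and>
     rect (fst a, min (snd a) (snd b)) (fst b, max (snd a) (snd b)) \<subseteq> P \<and>
     C' = (C - {a, b}) \<union> {(fst a, snd b), (fst b, snd a)})"

definition switch_equiv :: "cell set \<Rightarrow> nat \<Rightarrow> (cell set \<times> cell set) set" where
  "switch_equiv P k = {(C, C'). rook_config P k C \<and> rook_config P k C' \<and> (switch P)\<^sup>*\<^sup>* C C'}"

definition switching_rook_coeff :: "cell set \<Rightarrow> nat \<Rightarrow> nat" where
  "switching_rook_coeff P k = card ({C. rook_config P k C} // switch_equiv P k)"

definition canon_step :: "cell set \<Rightarrow> cell set \<Rightarrow> cell set" where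
  "canon_step B C = (C - B) \<union>
     set (zip (sorted_list_of_set (fst ` (C \<inter> B))) (sorted_list_of_set (snd ` (C \<inter> B))))"

definition canonical :: "cell set list \<Rightarrow> cell set \<Rightarrow> cell set" where
  "canonical Bs C = fold canon_step Bs C"

end

theory Submission
  imports Defs
begin

lemma attacks_sym: "attacks P c d = attacks P d c"
  unfolding attacks_def by blast

lemma col_extend:
  assumes K: "is_col P K" and u: "u \<in> K" and fv: "fst v = fst u"
    and seg: "\<And>y. min (snd u) (snd v) \<le> y \<Longrightarrow> y \<le> max (snd u) (snd v) \<Longrightarrow> (fst u, y) \<in> P"
  shows "v \<in> K"
proof -
  from K obtain a b where ab: "fst a \<le> fst b" "snd a \<le> snd b" "K = rect a b" "K \<subseteq> P"
    and vert: "\<forall>c\<in>K. \<forall>d\<in>K. fst c = fst d" and maxK: "\<not>(\<exists>R'. is_vrect_in P R' \<and> K \<subset> R')"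
    unfolding is_col_def is_vrect_in_def is_rect_in_def by blast
  have aK: "a \<in> K" "b \<in> K" using ab by (auto simp: rect_def)
  have fa: "fst a = fst u" "fst b = fst u" using vert aK u by blast+
  have su: "snd a \<le> snd u" "snd u \<le> snd b" using u ab by (auto simp: rect_def)
  define K' where "K' = rect (fst u, min (snd a) (snd v)) (fst u, max (snd b) (snd v))"
  have KP: "K' \<subseteq> P"
  proof
    fix c assume "c \<in> K'"
    then have c: "fst c = fst u" "min (snd a) (snd v) \<le> snd c" "snd c \<le> max (snd b) (snd v)"
      by (auto simp: K'_def rect_def)
    show "c \<in> P"
    proof (cases "snd a \<le> snd c \<and> snd c \<le> snd b")
      case True then have "c \<in> K" using c fa ab by (auto simp: rect_def)
      then show ?thesis using ab by auto
    next
      case False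
      then have "min (snd u) (snd v) \<le> snd c \<and> snd c \<le> max (snd u) (snd v)" using c su by auto
      from seg[of "snd c"] this c show ?thesis by (cases c) auto
    qed
  qed
  have "\<exists>a' b'. fst a' \<le> fst b' \<and> snd a' \<le> snd b' \<and> K' = rect a' b'"
    by (rule exI[of _ "(fst u, min (snd a) (snd v))"], rule exI[of _ "(fst u, max (snd b) (snd v))"])
       (use ab in \<open>auto simp: K'_def\<close>)
  then have "is_vrect_in P K'" using KP unfolding is_vrect_in_def is_rect_in_def
    by (auto simp: K'_def rect_def)
  moreover have "K \<subseteq> K'" using ab fa by (auto simp: K'_def rect_def)
  ultimately have "K = K'" using maxK by blast
  moreover have "v \<in> K'" using fv by (auto simp: K'_def rect_def)
  ultimately show ?thesis by simp
qed

lemma row_extend: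
  assumes K: "is_row P K" and u: "u \<in> K" and fv: "snd v = snd u"
    and seg: "\<And>x. min (fst u) (fst v) \<le> x \<Longrightarrow> x \<le> max (fst u) (fst v) \<Longrightarrow> (x, snd u) \<in> P"
  shows "v \<in> K"
proof -
  from K obtain a b where ab: "fst a \<le> fst b" "snd a \<le> snd b" "K = rect a b" "K \<subseteq> P"
    and vert: "\<forall>c\<in>K. \<forall>d\<in>K. snd c = snd d" and maxK: "\<not>(\<exists>R'. is_hrect_in P R' \<and> K \<subset> R')"
    unfolding is_row_def is_hrect_in_def is_rect_in_def by blast
  have aK: "a \<in> K" "b \<in> K" using ab by (auto simp: rect_def)
  have fa: "snd a = snd u" "snd b = snd u" using vert aK u by blast+
  have su: "fst a \<le> fst u" "fst u \<le> fst b" using u ab by (auto simp: rect_def)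
  define K' where "K' = rect (min (fst a) (fst v), snd u) (max (fst b) (fst v), snd u)"
  have KP: "K' \<subseteq> P"
  proof
    fix c assume "c \<in> K'"
    then have c: "snd c = snd u" "min (fst a) (fst v) \<le> fst c" "fst c \<le> max (fst b) (fst v)"
      by (auto simp: K'_def rect_def)
    show "c \<in> P"
    proof (cases "fst a \<le> fst c \<and> fst c \<le> fst b")
      case True then have "c \<in> K" using c fa ab by (auto simp: rect_def)
      then show ?thesis using ab by auto
    next
      case False
      then have "min (fst u) (fst v) \<le> fst c \<and> fst c \<le> max (fst u) (fst v)" using c su by auto
      from seg[of "fst c"] this c show ?thesis by (cases c) auto
    qed
  qed
  have "\<exists>a' b'. fst a' \<le> fst b' \<and> snd a' \<le> snd b' \<and> K' = rect a' b'"
    by (rule exI[of _ "(min (fst a) (fst v), snd u)"], rule exI[of _ "(max (fst b) (fst v), snd u)"])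
       (use ab in \<open>auto simp: K'_def\<close>)
  then have "is_hrect_in P K'" using KP unfolding is_hrect_in_def is_rect_in_def
    by (auto simp: K'_def rect_def)
  moreover have "K \<subseteq> K'" using ab fa by (auto simp: K'_def rect_def)
  ultimately have "K = K'" using maxK by blast
  moreover have "v \<in> K'" using fv by (auto simp: K'_def rect_def)
  ultimately show ?thesis by simp
qed

lemma col_exists:
  assumes "finite P" "u \<in> P" shows "\<exists>K. is_col P K \<and> u \<in> K"
proof -
  let ?S = "{R. is_vrect_in P R \<and> u \<in> R}"
  have fin: "finite ?S" using assms(1) by (rule finite_subset[rotated, OF finite_Pow_iff[THEN iffD2]]) (auto simp: is_vrect_in_def is_rect_in_def)
  have "rect u u \<in> ?S" using assms(2) by (auto simp: is_vrect_in_def is_rect_in_def rect_def prod_eq_iff)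
  then obtain m where m: "m \<in> ?S" "\<And>b. b \<in> ?S \<Longrightarrow> m \<le> b \<Longrightarrow> m = b"
    using finite_has_maximal[OF fin] by blast
  have "is_col P m" unfolding is_col_def using m by blast
  then show ?thesis using m by blast
qed

lemma row_exists:
  assumes "finite P" "u \<in> P" shows "\<exists>K. is_row P K \<and> u \<in> K"
proof -
  let ?S = "{R. is_hrect_in P R \<and> u \<in> R}"
  have fin: "finite ?S" using assms(1) by (rule finite_subset[rotated, OF finite_Pow_iff[THEN iffD2]]) (auto simp: is_hrect_in_def is_rect_in_def)
  have "rect u u \<in> ?S" using assms(2) by (auto simp: is_hrect_in_def is_rect_in_def rect_def prod_eq_iff)
  then obtain m where m: "m \<in> ?S" "\<And>b. b \<in> ?S \<Longrightarrow> m \<le> b \<Longrightarrow> m = b"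
    using finite_has_maximal[OF fin] by blast
  have "is_row P m" unfolding is_row_def using m by blast
  then show ?thesis using m by blast
qed

lemma col_fst: "is_col P K \<Longrightarrow> u \<in> K \<Longrightarrow> v \<in> K \<Longrightarrow> fst u = fst v"
  unfolding is_col_def is_vrect_in_def by blast
lemma row_snd: "is_row P K \<Longrightarrow> u \<in> K \<Longrightarrow> v \<in> K \<Longrightarrow> snd u = snd v"
  unfolding is_row_def is_hrect_in_def by blast
lemma col_sub: "is_col P K \<Longrightarrow> K \<subseteq> P"
  unfolding is_col_def is_vrect_in_def is_rect_in_def by blast
lemma row_sub: "is_row P K \<Longrightarrow> K \<subseteq> P"
  unfolding is_row_def is_hrect_in_def is_rect_in_def by blast

lemma same_col_in_rect:
  assumes "is_rect_in P B" "u \<in> B" "v \<in> B" "fst v = fst u" "is_col P K" "u \<in> K"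
  shows "v \<in> K"
proof (rule col_extend[OF assms(5,6,4)])
  fix y assume y: "min (snd u) (snd v) \<le> y" "y \<le> max (snd u) (snd v)"
  from assms(1) obtain a b where "B = rect a b" "B \<subseteq> P" unfolding is_rect_in_def by blast
  then show "(fst u, y) \<in> P" using assms(2,3) y by (auto simp: rect_def)
qed

lemma same_row_in_rect:
  assumes "is_rect_in P B" "u \<in> B" "v \<in> B" "snd v = snd u" "is_row P K" "u \<in> K"
  shows "v \<in> K"
proof (rule row_extend[OF assms(5,6,4)])
  fix y assume y: "min (fst u) (fst v) \<le> y" "y \<le> max (fst u) (fst v)"
  from assms(1) obtain a b where "B = rect a b" "B \<subseteq> P" unfolding is_rect_in_def by blast
  then show "(y, snd u) \<in> P" using assms(2,3) y by (auto simp: rect_def)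
qed

lemma col_unique:
  assumes "is_col P K1" "is_col P K2" "c \<in> K1" "c \<in> K2" shows "K1 = K2"
proof -
  have "K2 \<subseteq> K1" if "is_col P K1" "is_col P K2" "c \<in> K1" "c \<in> K2" for K1 K2
  proof
    fix v assume v: "v \<in> K2"
    have "is_rect_in P K2" using that(2) unfolding is_col_def is_vrect_in_def by blast
    then show "v \<in> K1" using same_col_in_rect[of P K2 c v K1] that v col_fst by metis
  qed
  then show ?thesis using assms by blast
qed

lemma row_unique:
  assumes "is_row P K1" "is_row P K2" "c \<in> K1" "c \<in> K2" shows "K1 = K2"
proof -
  have "K2 \<subseteq> K1" if "is_row P K1" "is_row P K2" "c \<in> K1" "c \<in> K2" for K1 K2
  proof
    fix v assume v: "v \<in> K2"
    have "is_rect_in P K2" using that(2) unfolding is_row_def is_hrect_in_def by blast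
    then show "v \<in> K1" using same_row_in_rect[of P K2 c v K1] that v row_snd by metis
  qed
  then show ?thesis using assms by blast
qed

lemma config_attack: "rook_config P k C \<Longrightarrow> c \<in> C \<Longrightarrow> d \<in> C \<Longrightarrow> \<not> attacks P c d"
  unfolding rook_config_def by blast

lemma canon_step_config:
  assumes P: "finite P" and B: "is_rect_in P B" and C: "rook_config P k C"
  shows "rook_config P k (canon_step B C)"
proof -
  define D where "D = C \<inter> B"
  define xs where "xs = sorted_list_of_set (fst ` D)"
  define ys where "ys = sorted_list_of_set (snd ` D)"
  define N where "N = set (zip xs ys)"
  have CP: "C \<subseteq> P" and fC: "finite C" and cC: "card C = k" using C unfolding rook_config_def by auto
  have fD: "finite D" using fC by (simp add: D_def)
  obtain a b where ab: "B = rect a b" and BP: "B \<subseteq> P" using B unfolding is_rect_in_def by blast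
  have injf: "inj_on fst D"
  proof
    fix u v assume u: "u \<in> D" and v: "v \<in> D" and e: "fst u = fst v"
    show "u = v"
    proof (rule ccontr)
      assume ne: "u \<noteq> v"
      have "u \<in> P" using u CP by (auto simp: D_def)
      then obtain K where K: "is_col P K" "u \<in> K" using col_exists[OF P] by blast
      have "v \<in> K" using same_col_in_rect[OF B _ _ _ K] u v e by (auto simp: D_def)
      then have "attacks P u v" using K ne unfolding attacks_def by blast
      then show False using config_attack[OF C] u v by (auto simp: D_def)
    qed
  qed
  have injs: "inj_on snd D"
  proof
    fix u v assume u: "u \<in> D" and v: "v \<in> D" and e: "snd u = snd v"
    show "u = v"
    proof (rule ccontr)
      assume ne: "u \<noteq> v"
      have "u \<in> P" using u CP by (auto simp: D_def)
      then obtain K where K: "is_row P K" "u \<in> K" using row_exists[OF P] by blast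
      have "v \<in> K" using same_row_in_rect[OF B _ _ _ K] u v e by (auto simp: D_def)
      then have "attacks P u v" using K ne unfolding attacks_def by blast
      then show False using config_attack[OF C] u v by (auto simp: D_def)
    qed
  qed
  have lxs: "length xs = card D" and dxs: "distinct xs" and sxs: "set xs = fst ` D"
    using injf fD by (auto simp: xs_def card_image)
  have lys: "length ys = card D" and dys: "distinct ys" and sys: "set ys = snd ` D"
    using injs fD by (auto simp: ys_def card_image)
  have NB: "N \<subseteq> B"
  proof
    fix p assume p: "p \<in> N"
    then have "fst p \<in> fst ` D" "snd p \<in> snd ` D"
      using set_zip_leftD[of "fst p" "snd p" xs ys] set_zip_rightD[of "fst p" "snd p" xs ys] sxs sys
      by (auto simp: N_def)
    then obtain u w where "u \<in> B" "w \<in> B" "fst p = fst u" "snd p = snd w" by (auto simp: D_def)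
    then show "p \<in> B" using ab by (auto simp: rect_def)
  qed
  have cN: "card N = card D"
    using lxs lys dxs by (simp add: N_def distinct_card distinct_zipI1)
  have Ndist: "fst p \<noteq> fst q \<and> snd p \<noteq> snd q" if pN: "p \<in> N" and qN: "q \<in> N" and pq: "p \<noteq> q" for p q
  proof -
    obtain i where i: "xs ! i = fst p" "ys ! i = snd p" "i < length xs" "i < length ys"
      using pN unfolding N_def in_set_zip by blast
    obtain j where j: "xs ! j = fst q" "ys ! j = snd q" "j < length xs" "j < length ys"
      using qN unfolding N_def in_set_zip by blast
    have "i \<noteq> j" using i j pq by (auto simp: prod_eq_iff)
    then show ?thesis using i j dxs dys by (metis nth_eq_iff_index_eq)
  qed
  have NN: "\<not> attacks P p q" if "p \<in> N" "q \<in> N" for p q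
  proof
    assume at: "attacks P p q"
    then have "p \<noteq> q" unfolding attacks_def by blast
    then have d: "fst p \<noteq> fst q \<and> snd p \<noteq> snd q" using Ndist that by blast
    from at obtain R where "is_row P R \<or> is_col P R" "p \<in> R" "q \<in> R" unfolding attacks_def by blast
    then show False using d row_snd[of P R p q] col_fst[of P R p q] by blast
  qed
  have NC: "\<not> attacks P p c" if p: "p \<in> N" and c: "c \<in> C - B" for p c
  proof
    assume at: "attacks P p c"
    have pB: "p \<in> B" using p NB by blast
    have "fst p \<in> fst ` D" "snd p \<in> snd ` D"
      using p set_zip_leftD[of "fst p" "snd p" xs ys] set_zip_rightD[of "fst p" "snd p" xs ys] sxs sys
      by (auto simp: N_def)
    then obtain u w where u: "u \<in> D" "fst u = fst p" and w: "w \<in> D" "snd w = snd p"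
      by (metis imageE)
    from at obtain R where R: "is_row P R \<or> is_col P R" "p \<in> R" "c \<in> R" unfolding attacks_def by blast
    show False
    proof (cases "is_row P R")
      case True
      have "w \<in> R" using same_row_in_rect[OF B pB _ _ True R(2)] w by (auto simp: D_def)
      moreover have "w \<noteq> c" using w c by (auto simp: D_def)
      ultimately have "attacks P w c" using True R unfolding attacks_def by blast
      then show False using config_attack[OF C] w c by (auto simp: D_def)
    next
      case False
      then have col: "is_col P R" using R by blast
      have "u \<in> R" using same_col_in_rect[OF B pB _ _ col R(2)] u by (auto simp: D_def)
      moreover have "u \<noteq> c" using u c by (auto simp: D_def)
      ultimately have "attacks P u c" using col R unfolding attacks_def by blast
      then show False using config_attack[OF C] u c by (auto simp: D_def)
    qed
  qed
  have eq: "canon_step B C = (C - B) \<union> N"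
    by (simp add: canon_step_def N_def xs_def ys_def D_def)
  have fN: "finite N" by (simp add: N_def)
  have "card ((C - B) \<union> N) = card (C - B) + card N"
    using NB fC fN by (intro card_Un_disjoint) auto
  also have "\<dots> = card (C - B) + card (C \<inter> B)" using cN by (simp add: D_def)
  also have "\<dots> = card C" using fC
    using card_Int_Diff[OF fC, of B] by simp
  finally have card: "card ((C - B) \<union> N) = k" using cC by simp
  show ?thesis unfolding eq rook_config_def
  proof (intro conjI ballI)
    show "C - B \<union> N \<subseteq> P" using CP NB BP by blast
    show "finite (C - B \<union> N)" using fC fN by simp
    show "card (C - B \<union> N) = k" by (rule card)
  next
    fix c d assume c: "c \<in> C - B \<union> N" and d: "d \<in> C - B \<union> N"
    show "\<not> attacks P c d"
    proof (cases "c \<in> N")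
      case True
      then show ?thesis using d NN NC by blast
    next
      case False
      then have c': "c \<in> C - B" using c by blast
      show ?thesis
      proof (cases "d \<in> N")
        case True then show ?thesis using NC[OF True c'] attacks_sym[of P c d] by simp
      next
        case False then show ?thesis using d c' config_attack[OF C] by blast
      qed
    qed
  qed
qed

lemma canonical_config:
  assumes P: "finite P" and Bs: "\<forall>B\<in>set Bs. is_rect_in P B" and C: "rook_config P k C"
  shows "rook_config P k (canonical Bs C)"
  using Bs C unfolding canonical_def
proof (induction Bs arbitrary: C)
  case Nil then show ?case by simp
next
  case (Cons B Bs)
  then show ?case using canon_step_config[OF P] by simp
qed

lemma switch_col_empty:
  assumes sw: "switch P C C'" and K: "is_col P K" and e: "C \<inter> K = {}"
  shows "C' \<inter> K = {}"
proof -
  obtain a b where a: "a \<in> C" and b: "b \<in> C" and lt: "fst a < fst b"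
    and R: "rect (fst a, min (snd a) (snd b)) (fst b, max (snd a) (snd b)) \<subseteq> P"
    and C': "C' = (C - {a, b}) \<union> {(fst a, snd b), (fst b, snd a)}"
    using sw unfolding switch_def by blast
  have "a \<notin> K" "b \<notin> K" using a b e by blast+
  have 1: "(fst a, snd b) \<notin> K"
  proof
    assume u: "(fst a, snd b) \<in> K"
    have "a \<in> K"
    proof (rule col_extend[OF K u])
      show "fst a = fst (fst a, snd b)" by simp
      fix y assume "min (snd (fst a, snd b)) (snd a) \<le> y" "y \<le> max (snd (fst a, snd b)) (snd a)"
      then show "(fst (fst a, snd b), y) \<in> P" using R lt by (auto simp: rect_def)
    qed
    then show False using \<open>a \<notin> K\<close> by blast
  qed
  have 2: "(fst b, snd a) \<notin> K"
  proof
    assume u: "(fst b, snd a) \<in> K"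
    have "b \<in> K"
    proof (rule col_extend[OF K u])
      show "fst b = fst (fst b, snd a)" by simp
      fix y assume "min (snd (fst b, snd a)) (snd b) \<le> y" "y \<le> max (snd (fst b, snd a)) (snd b)"
      then show "(fst (fst b, snd a), y) \<in> P" using R lt by (auto simp: rect_def)
    qed
    then show False using \<open>b \<notin> K\<close> by blast
  qed
  show ?thesis using 1 2 e unfolding C' by blast
qed

lemma switch_row_empty:
  assumes sw: "switch P C C'" and K: "is_row P K" and e: "C \<inter> K = {}"
  shows "C' \<inter> K = {}"
proof -
  obtain a b where a: "a \<in> C" and b: "b \<in> C" and lt: "fst a < fst b"
    and R: "rect (fst a, min (snd a) (snd b)) (fst b, max (snd a) (snd b)) \<subseteq> P"
    and C': "C' = (C - {a, b}) \<union> {(fst a, snd b), (fst b, snd a)}"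
    using sw unfolding switch_def by blast
  have "a \<notin> K" "b \<notin> K" using a b e by blast+
  have 1: "(fst a, snd b) \<notin> K"
  proof
    assume u: "(fst a, snd b) \<in> K"
    have "b \<in> K"
    proof (rule row_extend[OF K u])
      show "snd b = snd (fst a, snd b)" by simp
      fix x assume "min (fst (fst a, snd b)) (fst b) \<le> x" "x \<le> max (fst (fst a, snd b)) (fst b)"
      then show "(x, snd (fst a, snd b)) \<in> P" using R lt by (auto simp: rect_def)
    qed
    then show False using \<open>b \<notin> K\<close> by blast
  qed
  have 2: "(fst b, snd a) \<notin> K"
  proof
    assume u: "(fst b, snd a) \<in> K"
    have "a \<in> K"
    proof (rule row_extend[OF K u])
      show "snd a = snd (fst b, snd a)" by simp
      fix x assume "min (fst (fst b, snd a)) (fst a) \<le> x" "x \<le> max (fst (fst b, snd a)) (fst a)"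
      then show "(x, snd (fst b, snd a)) \<in> P" using R lt by (auto simp: rect_def)
    qed
    then show False using \<open>a \<notin> K\<close> by blast
  qed
  show ?thesis using 1 2 e unfolding C' by blast
qed

lemma switches_col_empty:
  assumes "(switch P)\<^sup>*\<^sup>* C C'" "is_col P K" "C \<inter> K = {}" shows "C' \<inter> K = {}"
  using assms(1)
proof (induction rule: rtranclp_induct)
  case base then show ?case using assms(3) by simp
next
  case (step y z) then show ?case using switch_col_empty[OF _ assms(2)] by blast
qed

lemma switches_row_empty:
  assumes "(switch P)\<^sup>*\<^sup>* C C'" "is_row P K" "C \<inter> K = {}" shows "C' \<inter> K = {}"
  using assms(1)
proof (induction rule: rtranclp_induct)
  case base then show ?case using assms(3) by simp
next
  case (step y z) then show ?case using switch_row_empty[OF _ assms(2)] by blast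
qed

lemma coeff1_switch:
  assumes c: "switching_rook_coeff P k = 1" and T: "rook_config P k T" and T': "rook_config P k T'"
  shows "(switch P)\<^sup>*\<^sup>* T T'"
proof -
  let ?A = "{C. rook_config P k C}" and ?r = "switch_equiv P k"
  from c obtain S where S: "?A // ?r = {S}" unfolding switching_rook_coeff_def by (auto simp: card_Suc_eq)
  have "?r `` {T} \<in> ?A // ?r" using T by (intro quotientI) simp
  then have 1: "?r `` {T} = S" using S by blast
  have "?r `` {T'} \<in> ?A // ?r" using T' by (intro quotientI) simp
  then have 2: "?r `` {T'} = S" using S by blast
  have "T' \<in> ?r `` {T'}" using T' by (simp add: switch_equiv_def)
  then have "(T, T') \<in> ?r" using 1 2 by (metis Image_singleton_iff)
  then show ?thesis by (simp add: switch_equiv_def)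
qed

lemma insert_ok:
  assumes S: "rook_config P k S" and K: "is_col P K" and L: "is_row P L" and cK: "c \<in> K" and cL: "c \<in> L"
    and eK: "S \<inter> K = {}" and eL: "S \<inter> L = {}"
  shows "rook_config P (Suc k) (insert c S)"
proof -
  have cP: "c \<in> P" using col_sub[OF K] cK by blast
  have cS: "c \<notin> S" using cK eK by blast
  have na: "\<not> attacks P c s" if s: "s \<in> S" for s
  proof
    assume "attacks P c s"
    then obtain R where R: "is_row P R \<or> is_col P R" "c \<in> R" "s \<in> R" unfolding attacks_def by blast
    show False
    proof (cases "is_row P R")
      case True then have "R = L" using row_unique[OF _ L] R cL by blast
      then show False using eL s R by blast
    next
      case False then have "R = K" using col_unique[OF _ K] R cK by blast
      then show False using eK s R by blast
    qed
  qed
  show ?thesis unfolding rook_config_def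
  proof (intro conjI ballI)
    show "insert c S \<subseteq> P" using S cP unfolding rook_config_def by blast
    show "finite (insert c S)" using S unfolding rook_config_def by blast
    show "card (insert c S) = Suc k" using S cS unfolding rook_config_def by simp
  next
    fix x y assume x: "x \<in> insert c S" and y: "y \<in> insert c S"
    show "\<not> attacks P x y"
    proof (cases "x = c")
      case True
      then show ?thesis
      proof (cases "y = c")
        case True then show ?thesis using \<open>x = c\<close> unfolding attacks_def by blast
      next
        case False then show ?thesis using na y \<open>x = c\<close> by blast
      qed
    next
      case False
      then have xS: "x \<in> S" using x by blast
      show ?thesis
      proof (cases "y = c")
        case True then show ?thesis using na[OF xS] attacks_sym[of P x y] by simp
      next
        case False then show ?thesis using config_attack[OF S xS] y by blast
      qed
    qed
  qed
qed

lemma le_rook_number: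
  assumes P: "finite P" and C: "rook_config P k C" shows "k \<le> rook_number P"
proof -
  have "{k. \<exists>C. rook_config P k C} \<subseteq> {..card P}"
    using P by (auto simp: rook_config_def intro: card_mono)
  then have "finite {k. \<exists>C. rook_config P k C}" by (rule finite_subset) simp
  then show ?thesis unfolding rook_number_def using C by (intro Max_ge) auto
qed

lemma no_empty_line:
  assumes P: "finite P" and c1: "switching_rook_coeff P (rook_number P) = 1"
    and T: "rook_config P (rook_number P) T"
    and K: "is_col P K" and L: "is_row P L" and cK: "c \<in> K" and cL: "c \<in> L"
    and e: "T \<inter> K = {} \<or> T \<inter> L = {}"
  shows False
proof -
  let ?d = "rook_number P"
  have cT: "c \<notin> T" using e cK cL by blast
  show False
  proof (cases "T \<inter> K = {}")
    case eK: True
    show False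
    proof (cases "T \<inter> L = {}")
      case True
      have "rook_config P (Suc ?d) (insert c T)" by (rule insert_ok[OF T K L cK cL eK True])
      then show False using le_rook_number[OF P] by fastforce
    next
      case False
      then obtain t where t: "t \<in> T" "t \<in> L" by blast
      have S: "rook_config P (?d - 1) (T - {t})" using T t unfolding rook_config_def
        by (auto simp: config_attack)
      have eL: "(T - {t}) \<inter> L = {}"
      proof (rule ccontr)
        assume "(T - {t}) \<inter> L \<noteq> {}"
        then obtain t' where "t' \<in> T" "t' \<noteq> t" "t' \<in> L" by blast
        then have "attacks P t t'" using t L unfolding attacks_def by blast
        then show False using config_attack[OF T t(1) \<open>t' \<in> T\<close>] by blast
      qed
      have "?d \<noteq> 0" using T t unfolding rook_config_def by (metis card_0_eq empty_iff)
      then have T': "rook_config P ?d (insert c (T - {t}))"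
        using insert_ok[OF S K L cK cL _ eL] eK by (metis Diff_disjoint Int_Diff Int_empty_left Suc_pred' not_gr0 inf_commute)
      have "(switch P)\<^sup>*\<^sup>* T (insert c (T - {t}))" by (rule coeff1_switch[OF c1 T T'])
      then have "insert c (T - {t}) \<inter> K = {}" using switches_col_empty K eK by blast
      then show False using cK by blast
    qed
  next
    case False
    then have eL: "T \<inter> L = {}" using e by blast
    from False obtain t where t: "t \<in> T" "t \<in> K" by blast
    have S: "rook_config P (?d - 1) (T - {t})" using T t unfolding rook_config_def
      by (auto simp: config_attack)
    have eK: "(T - {t}) \<inter> K = {}"
    proof (rule ccontr)
      assume "(T - {t}) \<inter> K \<noteq> {}"
      then obtain t' where "t' \<in> T" "t' \<noteq> t" "t' \<in> K" by blast
      then have "attacks P t t'" using t K unfolding attacks_def by blast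
      then show False using config_attack[OF T t(1) \<open>t' \<in> T\<close>] by blast
    qed
    have "?d \<noteq> 0" using T t unfolding rook_config_def by (metis card_0_eq empty_iff)
    then have T': "rook_config P ?d (insert c (T - {t}))"
      using insert_ok[OF S K L cK cL eK] eL by (metis Diff_disjoint Int_Diff Int_empty_left Suc_pred' not_gr0 inf_commute)
    have "(switch P)\<^sup>*\<^sup>* T (insert c (T - {t}))" by (rule coeff1_switch[OF c1 T T'])
    then have "insert c (T - {t}) \<inter> L = {}" using switches_row_empty L eL by blast
    then show False using cL by blast
  qed
qed

theorem lemma4p1:
  fixes P :: "cell set" and Bs :: "cell set list" and C :: "cell set"
  assumes "collection P"
    and "distinct Bs" and "set Bs = {B. is_max_rect P B}"
    and "switching_rook_coeff P (rook_number P) = 1"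
    and "rook_config P (rook_number P) C"
  shows "(\<forall>K. is_col P K \<longrightarrow> (\<exists>t\<in>canonical Bs C. t \<in> K))
       \<and> (\<forall>K. is_row P K \<longrightarrow> (\<exists>t\<in>canonical Bs C. t \<in> K))
       \<and> (\<forall>c\<in>P - canonical Bs C. card {t \<in> canonical Bs C. attacks P t c} = 2)"
proof -
  let ?T = "canonical Bs C"
  have P: "finite P" using assms(1) unfolding collection_def by blast
  have Bs: "\<forall>B\<in>set Bs. is_rect_in P B" using assms(3) unfolding is_max_rect_def by blast
  have T: "rook_config P (rook_number P) ?T" by (rule canonical_config[OF P Bs assms(5)])
  have TP: "?T \<subseteq> P" using T unfolding rook_config_def by blast
  have colK: "\<exists>t\<in>?T. t \<in> K" if K: "is_col P K" for K
  proof (rule ccontr)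
    assume "\<not> (\<exists>t\<in>?T. t \<in> K)"
    then have e: "?T \<inter> K = {}" by blast
    from K obtain a b where "fst a \<le> fst b" "snd a \<le> snd b" "K = rect a b"
      unfolding is_col_def is_vrect_in_def is_rect_in_def by blast
    then have cK: "a \<in> K" by (auto simp: rect_def)
    then have "a \<in> P" using col_sub[OF K] by blast
    then obtain L where L: "is_row P L" "a \<in> L" using row_exists[OF P] by blast
    show False using no_empty_line[OF P assms(4) T K L(1) cK L(2)] e by blast
  qed
  have rowL: "\<exists>t\<in>?T. t \<in> L" if L: "is_row P L" for L
  proof (rule ccontr)
    assume "\<not> (\<exists>t\<in>?T. t \<in> L)"
    then have e: "?T \<inter> L = {}" by blast
    from L obtain a b where "fst a \<le> fst b" "snd a \<le> snd b" "L = rect a b"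
      unfolding is_row_def is_hrect_in_def is_rect_in_def by blast
    then have cL: "a \<in> L" by (auto simp: rect_def)
    then have "a \<in> P" using row_sub[OF L] by blast
    then obtain K where K: "is_col P K" "a \<in> K" using col_exists[OF P] by blast
    show False using no_empty_line[OF P assms(4) T K(1) L K(2) cL] e by blast
  qed
  have two: "card {t \<in> ?T. attacks P t c} = 2" if c: "c \<in> P - ?T" for c
  proof -
    obtain K where K: "is_col P K" "c \<in> K" using col_exists[OF P] c by blast
    obtain L where L: "is_row P L" "c \<in> L" using row_exists[OF P] c by blast
    obtain tk where tk: "tk \<in> ?T" "tk \<in> K" using colK[OF K(1)] by blast
    obtain tl where tl: "tl \<in> ?T" "tl \<in> L" using rowL[OF L(1)] by blast
    have tkc: "tk \<noteq> c" "tl \<noteq> c" using tk tl c by blast+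
    have "fst tk = fst c" using col_fst[OF K(1) tk(2) K(2)] .
    moreover have "snd tl = snd c" using row_snd[OF L(1) tl(2) L(2)] .
    ultimately have ne: "tk \<noteq> tl" using tkc by (metis prod_eqI)
    have "{t \<in> ?T. attacks P t c} = {tk, tl}"
    proof (intro equalityI subsetI)
      fix t assume "t \<in> {t \<in> ?T. attacks P t c}"
      then have t: "t \<in> ?T" "attacks P t c" by auto
      then obtain R where R: "is_row P R \<or> is_col P R" "t \<in> R" "c \<in> R" unfolding attacks_def by blast
      show "t \<in> {tk, tl}"
      proof (cases "is_row P R")
        case True then have "R = L" using row_unique[OF _ L(1)] R L(2) by blast
        then have "t = tl"
          using config_attack[OF T t(1) tl(1)] R(2) tl(2) L(1) unfolding attacks_def by blast
        then show ?thesis by simp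
      next
        case False then have "R = K" using col_unique[OF _ K(1)] R K(2) by blast
        then have "t = tk"
          using config_attack[OF T t(1) tk(1)] R(2) tk(2) K(1) unfolding attacks_def by blast
        then show ?thesis by simp
      qed
    next
      fix t assume "t \<in> {tk, tl}"
      then show "t \<in> {t \<in> ?T. attacks P t c}"
        using tk tl tkc K L unfolding attacks_def by blast
    qed
    then show ?thesis using ne by simp
  qed
  show ?thesis using colK rowL two by blast
qed

end
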